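(* Let $0<\theta<1$, let $\rho,\tau$ be positive integers with $\rho\le\tau$, and let $m=2^\beta$ for some $\beta\in\mathbb{N}=\{0,1,2,\dots\}$. Then $$L_m^{\rho/\tau}(\theta)=\int_{-\infty}^{\infty}\ell_m^{\rho/\tau}(\varepsilon)\,f_\theta(\varepsilon)\,d\varepsilon = 1+\lg m+\frac{1}{2}\,\frac{\theta^{m/2}}{1-\theta^{m/2}}\left(\theta^{\frac{\rho}{2\tau}}+\theta^{-\frac{\rho}{2\tau}}\right).$$
   Context: $\lg$ denotes $\log_2$. The Laplace density with parameter $\theta\in(0,1)$ is $f_\theta(\varepsilon)=-\frac{\ln\theta}{2}\theta^{|\varepsilon|}$, $\varepsilon\in\mathbb{R}$. The generalized Rice mapping $M:\mathbb{R}\to\mathbb{Z}_{\ge0}$ is $M(\varepsilon)=\lfloor 2\varepsilon\rfloor$ if $\varepsilon\ge 0$ and $M(\varepsilon)=-\lfloor 2\varepsilon\rfloor-1$ if $\varepsilon<0$. For a positive integer $m$, the Golomb codeword of a non-negative integer $N$ consists of $j=\lfloor N/m\rfloor$ in unary ($j+1$ bits) followed by $k=N \bmod m$ in minimal binary, which uses $\lfloor\lg m\rfloor$ bits if $k<2^{\lceil\lg m\rceil}-m$ and $\lceil\lg m\rceil$ bits otherwise; let $\lambda_m(N)$ be the total number of bits. The (finest-precision) code length of a real residual $\varepsilon$ is $\ell_m(\varepsilon)=\lambda_m(M(\varepsilon))$. For positive integers $\rho\le\tau$ (precision $\rho/\tau$), the code length assigned to the real residual $\varepsilon$ at precision $\rho/\tau$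 is modeled as the finest-precision assignment shifted left by $\rho/(2\tau)$: $\ell_m^{\rho/\tau}(\varepsilon)=\ell_m(\varepsilon+\rho/(2\tau))$. $L_m^{\rho/\tau}(\theta)$ denotes the average code length under the Laplace density, as in the claim. *)

theory Defs
  imports "HOL-Analysis.Analysis"
begin

definition laplace_density :: "real \<Rightarrow> real \<Rightarrow> real" where
  "laplace_density \<theta> \<epsilon> = - ln \<theta> / 2 * \<theta> powr \<bar>\<epsilon>\<bar>"

definition rice_map :: "real \<Rightarrow> nat" where
  "rice_map \<epsilon> = (if \<epsilon> \<ge> 0 then nat \<lfloor>2 * \<epsilon>\<rfloor> else nat (- \<lfloor>2 * \<epsilon>\<rfloor> - 1))"

text \<open>Length in bits of the Golomb codeword of N with parameter m:
  unary part (N div m + 1 bits) plus minimal binary code of N mod m.\<close>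
definition golomb_len :: "nat \<Rightarrow> nat \<Rightarrow> nat" where
  "golomb_len m N =
     N div m + 1 +
     (if int (N mod m) < 2 ^ nat \<lceil>log 2 (real m)\<rceil> - int m
      then nat \<lfloor>log 2 (real m)\<rfloor> else nat \<lceil>log 2 (real m)\<rceil>)"

definition code_len :: "nat \<Rightarrow> real \<Rightarrow> nat" where
  "code_len m \<epsilon> = golomb_len m (rice_map \<epsilon>)"

definition code_len_prec :: "nat \<Rightarrow> nat \<Rightarrow> nat \<Rightarrow> real \<Rightarrow> nat" where
  "code_len_prec m \<rho> \<tau> \<epsilon> = code_len m (\<epsilon> + real \<rho> / (2 * real \<tau>))"

definition avg_code_len :: "nat \<Rightarrow> nat \<Rightarrow> nat \<Rightarrow> real \<Rightarrow> real" where
  "avg_code_len m \<rho> \<tau> \<theta> =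
     integral UNIV (\<lambda>\<epsilon>. real (code_len_prec m \<rho> \<tau> \<epsilon>) * laplace_density \<theta> \<epsilon>)"

end

theory Submission
  imports Defs
begin

lemma golomb_pow2: "golomb_len (2^b) N = N div 2^b + 1 + b"
proof -
  have l: "log 2 (real (2^b::nat)) = real b" by (simp add: log_nat_power)
  show ?thesis unfolding golomb_len_def l by simp
qed

lemma rice_div_iff:
  assumes m: "m > 0"
  shows "n < rice_map x div m \<longleftrightarrow> (if x \<ge> 0 then (real n + 1) * real m / 2 \<le> x else x < - ((real n + 1) * real m / 2))"
proof (cases "x \<ge> 0")
  case True
  have "n < rice_map x div m \<longleftrightarrow> (n+1) * m \<le> nat \<lfloor>2*x\<rfloor>"
    using m True by (simp add: rice_map_def Suc_le_eq[symmetric] less_eq_div_iff_mult_less_eq mult.commute)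
  also have "\<dots> \<longleftrightarrow> int ((n+1)*m) \<le> \<lfloor>2*x\<rfloor>" using True by linarith
  also have "\<dots> \<longleftrightarrow> real ((n+1)*m) \<le> 2*x" by (metis le_floor_iff of_int_of_nat_eq)
  also have "\<dots> \<longleftrightarrow> (real n + 1) * real m / 2 \<le> x" by (simp add: algebra_simps)
  finally show ?thesis using True by simp
next
  case False
  have "n < rice_map x div m \<longleftrightarrow> (n+1) * m \<le> nat (- \<lfloor>2*x\<rfloor> - 1)"
    using m False by (simp add: rice_map_def less_eq_div_iff_mult_less_eq Suc_le_eq[symmetric] mult.commute)
  also have "\<dots> \<longleftrightarrow> \<lfloor>2*x\<rfloor> < - int ((n+1)*m)" using False by linarith
  also have "\<dots> \<longleftrightarrow> 2*x < real_of_int (- int ((n+1)*m))" by (rule floor_less_iff)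
  also have "\<dots> \<longleftrightarrow> x < - ((real n + 1) * real m / 2)"
  proof -
    have e: "real_of_int (- int ((n + 1) * m)) = - ((real n + 1) * real m)" by (simp add: algebra_simps)
    show ?thesis unfolding e by linarith
  qed
  finally show ?thesis using False by simp
qed

lemma meas: "(\<lambda>x. real (rice_map x div m)) \<in> borel_measurable borel"
  unfolding rice_map_def by measurable


lemma lap_pos: "0 < \<theta> \<Longrightarrow> \<theta> < 1 \<Longrightarrow> 0 \<le> laplace_density \<theta> x"
proof -
  assume "0 < \<theta>" "\<theta> < 1"
  hence "ln \<theta> \<le> 0" by simp
  hence "ln \<theta> * \<theta> powr \<bar>x\<bar> \<le> 0" by (simp add: mult_nonpos_nonneg)
  thus ?thesis unfolding laplace_density_def by simp
qed

lemma lap_meas[measurable]: "laplace_density \<theta> \<in> borel_measurable borel"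
  unfolding laplace_density_def by measurable

lemma tailA:
  assumes t: "0 < \<theta>" "\<theta> < 1" and a: "a \<ge> 0"
  shows "(\<integral>\<^sup>+x. ennreal (laplace_density \<theta> x) * indicator {a..} x \<partial>lborel) = ennreal (\<theta> powr a / 2)"
proof -
  define c where "c = - ln \<theta>"
  have c: "c > 0" using t by (simp add: c_def ln_less_zero)
  have "((\<lambda>x. c/2 * exp (-c*x)) has_integral c/2 * (exp (-c*a)/c)) {a..}"
    by (intro has_integral_mult_right has_integral_exp_minus_to_infinity c)
  moreover have "c/2 * (exp (-c*a)/c) = \<theta> powr a / 2"
    using c t by (simp add: powr_def c_def)
  moreover have "\<And>x. x \<in> {a..} \<Longrightarrow> c/2 * exp (-c*x) = laplace_density \<theta> x"
    using t a by (auto simp: laplace_density_def c_def powr_def)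
  ultimately have "(laplace_density \<theta> has_integral \<theta> powr a / 2) {a..}"
    using has_integral_eq by (metis (no_types, lifting))
  thus ?thesis
    by (intro nn_integral_has_integral_lebesgue') (use lap_pos[OF t] in auto)
qed

lemma tailB:
  assumes t: "0 < \<theta>" "\<theta> < 1" and b: "b \<ge> 0"
  shows "(\<integral>\<^sup>+x. ennreal (laplace_density \<theta> x) * indicator {..< -b} x \<partial>lborel) = ennreal (\<theta> powr b / 2)"
proof -
  have m: "(\<lambda>x. ennreal (laplace_density \<theta> x) * indicator {..< -b} x) \<in> borel_measurable borel"
    unfolding laplace_density_def by measurable
  have eq: "(\<lambda>x. ennreal (laplace_density \<theta> (0 + -1 * x)) * indicator {..< -b} (0 + -1*x))
     = (\<lambda>x. ennreal (laplace_density \<theta> x) * indicator {b<..} x)"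
    by (auto simp: fun_eq_iff laplace_density_def indicator_def)
  have "(\<integral>\<^sup>+x. ennreal (laplace_density \<theta> x) * indicator {..< -b} x \<partial>lborel)
      = (\<integral>\<^sup>+x. ennreal (laplace_density \<theta> x) * indicator {b<..} x \<partial>lborel)"
    using nn_integral_real_affine[OF m, of "-1" 0] unfolding eq by (simp flip: one_ennreal_def)
  also have "\<dots> = ennreal (\<theta> powr b / 2)"
  proof -
    define c where "c = - ln \<theta>"
    have c: "c > 0" using t by (simp add: c_def ln_less_zero)
    have "((\<lambda>x. c/2 * exp (-c*x)) has_integral c/2 * (exp (-c*b)/c)) {b..}"
      by (intro has_integral_mult_right has_integral_exp_minus_to_infinity c)
    moreover have "c/2 * (exp (-c*b)/c) = \<theta> powr b / 2"
      using c t by (simp add: powr_def c_def)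
    moreover have "\<And>x. x \<in> {b..} \<Longrightarrow> c/2 * exp (-c*x) = laplace_density \<theta> x"
      using t b by (auto simp: laplace_density_def c_def powr_def)
    ultimately have "(laplace_density \<theta> has_integral \<theta> powr b / 2) {b..}"
      using has_integral_eq by (metis (no_types, lifting))
    moreover have "negligible {x \<in> {b..} - {b<..}. laplace_density \<theta> x \<noteq> 0}"
      by (rule negligible_subset[of "{b}"]) auto
    moreover have "{x \<in> {b<..} - {b..}. laplace_density \<theta> x \<noteq> 0} = {}" by auto
    ultimately have "(laplace_density \<theta> has_integral \<theta> powr b / 2) {b<..}"
      using has_integral_spike_set_eq[where f="laplace_density \<theta>" and S="{b..}" and T="{b<..}"] by (metis negligible_empty)
    thus ?thesis
      by (intro nn_integral_has_integral_lebesgue') (use lap_pos[OF t] in auto)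
  qed
  finally show ?thesis .
qed

lemma total:
  assumes t: "0 < \<theta>" "\<theta> < 1"
  shows "(\<integral>\<^sup>+x. ennreal (laplace_density \<theta> x) \<partial>lborel) = 1"
proof -
  have "(\<integral>\<^sup>+x. ennreal (laplace_density \<theta> x) \<partial>lborel)
     = (\<integral>\<^sup>+x. ennreal (laplace_density \<theta> x) * indicator {0..} x + ennreal (laplace_density \<theta> x) * indicator {..< -0} x \<partial>lborel)"
    by (intro nn_integral_cong) (auto simp: indicator_def)
  also have "\<dots> = ennreal (\<theta> powr 0 / 2) + ennreal (\<theta> powr 0 / 2)"
    by (subst nn_integral_add) (use tailA[OF t, of 0] tailB[OF t, of 0] in auto)
  also have "\<dots> = 1" using t by (subst ennreal_plus[symmetric]) auto
  finally show ?thesis .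
qed


lemma powr_geo: "0 < \<theta> \<Longrightarrow> \<theta> powr ((real n + 1)*h) = (\<theta> powr h)^Suc n"
proof -
  assume t: "0 < \<theta>"
  have "(\<theta> powr h)^Suc n = (\<theta> powr h) powr real (Suc n)" by (rule powr_realpow[symmetric]) (use t in auto)
  also have "\<dots> = \<theta> powr ((real n + 1)*h)" by (simp add: powr_powr algebra_simps)
  finally show ?thesis by simp
qed

lemma tteq_aux:
  assumes t: "0 < \<theta>"
  shows "\<theta> powr ((real n + 1) * h - \<delta>) / 2 + \<theta> powr ((real n + 1) * h + \<delta>) / 2
     = ((\<theta> powr (-\<delta>) + \<theta> powr \<delta>) / 2) * (\<theta> powr h * (\<theta> powr h) ^ n)"
proof -
  have e1: "\<theta> powr ((real n + 1)*h - \<delta>) = \<theta> powr ((real n + 1)*h) * \<theta> powr (-\<delta>)"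
    by (simp add: powr_add[symmetric])
  have e2: "\<theta> powr ((real n + 1)*h + \<delta>) = \<theta> powr ((real n + 1)*h) * \<theta> powr \<delta>"
    by (simp add: powr_add[symmetric])
  show ?thesis unfolding e1 e2 powr_geo[OF t] power_Suc by (simp add: algebra_simps add_divide_distrib)
qed

theorem theorem1:
  fixes \<theta> :: real and \<rho> \<tau> m \<beta> :: nat
  assumes "0 < \<theta>" "\<theta> < 1"
    and "0 < \<rho>" "\<rho> \<le> \<tau>"
    and "m = 2 ^ \<beta>"
  shows "(\<lambda>\<epsilon>. real (code_len_prec m \<rho> \<tau> \<epsilon>) * laplace_density \<theta> \<epsilon>) integrable_on UNIV
    \<and> avg_code_len m \<rho> \<tau> \<theta> =
        1 + log 2 (real m) + 1 / 2 * (\<theta> powr (real m / 2) / (1 - \<theta> powr (real m / 2)))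
          * (\<theta> powr (real \<rho> / (2 * real \<tau>)) + \<theta> powr (- (real \<rho> / (2 * real \<tau>))))"
proof -
  note t = assms(1,2)
  define h where "h = real m / 2"
  define \<delta> where "\<delta> = real \<rho> / (2 * real \<tau>)"
  define p where "p = laplace_density \<theta>"
  define D where "D = (\<lambda>\<epsilon>. rice_map (\<epsilon> + \<delta>) div m)"
  define f where "f = (\<lambda>\<epsilon>. real (code_len_prec m \<rho> \<tau> \<epsilon>) * laplace_density \<theta> \<epsilon>)"
  define A where "A = (\<lambda>n::nat. {(real n + 1) * h - \<delta> ..})"
  define B where "B = (\<lambda>n::nat. {..< - ((real n + 1) * h + \<delta>)})"
  define q where "q = \<theta> powr h"
  define K where "K = (\<theta> powr (-\<delta>) + \<theta> powr \<delta>) / 2"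
  have m0: "m > 0" using assms(5) by simp
  have h1: "h \<ge> 1/2" using m0 by (simp add: h_def)
  have d0: "0 \<le> \<delta>" "\<delta> \<le> 1/2" using assms(3,4) by (auto simp: \<delta>_def divide_simps)
  have logm: "log 2 (real m) = real \<beta>" using assms(5) by (simp add: log_nat_power)
  have cl: "\<And>\<epsilon>. real (code_len_prec m \<rho> \<tau> \<epsilon>) = 1 + real \<beta> + real (D \<epsilon>)"
    unfolding code_len_prec_def code_len_def D_def \<delta>_def assms(5) golomb_pow2 by simp
  have p0: "\<And>x. 0 \<le> p x" using lap_pos[OF t] by (simp add: p_def)
  have ind: "\<And>n \<epsilon>. indicator (A n) \<epsilon> + indicator (B n) \<epsilon> = (if n < D \<epsilon> then 1 else (0::ennreal))"
  proof -
    fix n \<epsilon>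
    have hh: "(real n + 1) * h > 0" using h1 by (simp add: add_pos_nonneg)
    have "n < D \<epsilon> \<longleftrightarrow> (if \<epsilon> + \<delta> \<ge> 0 then (real n + 1) * h \<le> \<epsilon> + \<delta> else \<epsilon> + \<delta> < - ((real n + 1) * h))"
      unfolding D_def h_def using rice_div_iff[OF m0] by simp
    thus "indicator (A n) \<epsilon> + indicator (B n) \<epsilon> = (if n < D \<epsilon> then 1 else (0::ennreal))"
      using hh by (auto simp: A_def B_def indicator_def split: if_splits)
  qed
  have pw: "\<And>\<epsilon>. ennreal (f \<epsilon>) = ennreal (1 + real \<beta>) * ennreal (p \<epsilon>)
       + (\<Sum>n. ennreal (p \<epsilon>) * indicator (A n) \<epsilon> + ennreal (p \<epsilon>) * indicator (B n) \<epsilon>)"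
  proof -
    fix \<epsilon>
    have "(\<Sum>n. ennreal (p \<epsilon>) * indicator (A n) \<epsilon> + ennreal (p \<epsilon>) * indicator (B n) \<epsilon>)
        = (\<Sum>n. if n < D \<epsilon> then ennreal (p \<epsilon>) else 0)"
      by (intro arg_cong[where f=suminf] ext) (simp add: distrib_left[symmetric] ind)
    also have "\<dots> = (\<Sum>n<D \<epsilon>. if n < D \<epsilon> then ennreal (p \<epsilon>) else 0)"
      by (rule suminf_finite) auto
    also have "\<dots> = (\<Sum>n<D \<epsilon>. ennreal (p \<epsilon>))" by simp
    also have "\<dots> = ennreal (real (D \<epsilon>) * p \<epsilon>)"
      using p0 by (simp add: ennreal_mult ennreal_of_nat_eq_real_of_nat)
    finally have s: "(\<Sum>n. ennreal (p \<epsilon>) * indicator (A n) \<epsilon> + ennreal (p \<epsilon>) * indicator (B n) \<epsilon>)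
        = ennreal (real (D \<epsilon>) * p \<epsilon>)" .
    have "f \<epsilon> = (1 + real \<beta>) * p \<epsilon> + real (D \<epsilon>) * p \<epsilon>"
      by (simp add: f_def cl p_def algebra_simps)
    thus "ennreal (f \<epsilon>) = ennreal (1 + real \<beta>) * ennreal (p \<epsilon>)
       + (\<Sum>n. ennreal (p \<epsilon>) * indicator (A n) \<epsilon> + ennreal (p \<epsilon>) * indicator (B n) \<epsilon>)"
      unfolding s using p0 by (simp add: ennreal_plus[symmetric] ennreal_mult)
  qed
  have pm[measurable]: "p \<in> borel_measurable borel" by (simp add: p_def)
  have Am[measurable]: "\<And>n. A n \<in> sets borel" "\<And>n. B n \<in> sets borel" by (auto simp: A_def B_def)
  have hn: "\<And>n::nat. h \<le> (real n + 1) * h" using h1 by (simp add: distrib_right)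
  have tA: "\<And>n. (\<integral>\<^sup>+x. ennreal (p x) * indicator (A n) x \<partial>lborel) = ennreal (\<theta> powr ((real n + 1) * h - \<delta>) / 2)"
    unfolding A_def p_def
  proof (intro tailA[OF t])
    fix n :: nat show "0 \<le> (real n + 1) * h - \<delta>" using hn[of n] h1 d0 by linarith
  qed
  have tB: "\<And>n. (\<integral>\<^sup>+x. ennreal (p x) * indicator (B n) x \<partial>lborel) = ennreal (\<theta> powr ((real n + 1) * h + \<delta>) / 2)"
    unfolding B_def p_def
  proof (intro tailB[OF t])
    fix n :: nat show "0 \<le> (real n + 1) * h + \<delta>" using hn[of n] h1 d0 by linarith
  qed
  define tt where "tt = (\<lambda>n::nat. \<theta> powr ((real n + 1) * h - \<delta>) / 2 + \<theta> powr ((real n + 1) * h + \<delta>) / 2)"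
  have tt0: "\<And>n. 0 \<le> tt n" by (simp add: tt_def)
  have tteq: "\<And>n. tt n = K * (q * q ^ n)" unfolding tt_def K_def q_def by (rule tteq_aux[OF t(1)])
  have q01: "0 < q" "q < 1" using t h1 by (auto simp: q_def powr01_less_one)
  have "(\<lambda>n. q ^ n) sums (1 / (1 - q))" using q01 by (intro geometric_sums) simp
  hence "(\<lambda>n. K * (q * q ^ n)) sums (K * (q * (1 / (1 - q))))" by (intro sums_mult)
  moreover have ttf: "tt = (\<lambda>n. K * (q * q ^ n))" by (rule ext) (rule tteq)
  ultimately have tts: "tt sums (K * (q / (1 - q)))" by simp
  have "(\<integral>\<^sup>+x. ennreal (f x) \<partial>lborel) = (\<integral>\<^sup>+x. ennreal (1 + real \<beta>) * ennreal (p x)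
       + (\<Sum>n. ennreal (p x) * indicator (A n) x + ennreal (p x) * indicator (B n) x) \<partial>lborel)"
    using pw by simp
  also have "\<dots> = ennreal (1 + real \<beta>) * (\<integral>\<^sup>+x. ennreal (p x) \<partial>lborel)
      + (\<Sum>n. (\<integral>\<^sup>+x. ennreal (p x) * indicator (A n) x \<partial>lborel) + (\<integral>\<^sup>+x. ennreal (p x) * indicator (B n) x \<partial>lborel))"
    by (simp add: nn_integral_add nn_integral_cmult nn_integral_suminf)
  also have "\<dots> = ennreal (1 + real \<beta>) + (\<Sum>n. ennreal (tt n))"
    using total[OF t, folded p_def] by (simp add: tA tB tt_def ennreal_plus)
  also have "\<dots> = ennreal (1 + real \<beta> + K * (q / (1 - q)))"
  proof -
    have S0: "0 \<le> K * (q / (1 - q))" using q01 by (simp add: K_def)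
    show ?thesis unfolding suminf_ennreal_eq[OF tt0 tts]
      by (rule ennreal_plus[symmetric]) (use S0 in auto)
  qed
  finally have nn: "(\<integral>\<^sup>+x. ennreal (f x) \<partial>lborel) = ennreal (1 + real \<beta> + K * (q / (1 - q)))" .
  have fm: "f \<in> borel_measurable borel"
  proof -
    have "f = (\<lambda>\<epsilon>. (1 + real \<beta> + real (rice_map (\<epsilon> + \<delta>) div m)) * p \<epsilon>)"
      by (simp add: fun_eq_iff f_def cl D_def p_def)
    also have "\<dots> \<in> borel_measurable borel"
      unfolding rice_map_def by measurable
    finally show ?thesis .
  qed
  have f0: "\<And>x. 0 \<le> f x" using lap_pos[OF t] by (simp add: f_def)
  have Rpos: "0 \<le> 1 + real \<beta> + K * (q / (1 - q))" using q01 by (simp add: K_def)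
  have hi: "(f has_integral (1 + real \<beta> + K * (q / (1 - q)))) UNIV"
    by (rule nn_integral_has_integral[OF fm f0 nn Rpos])
  have R: "1 + real \<beta> + K * (q / (1 - q)) = 1 + log 2 (real m) + 1 / 2 * (\<theta> powr (real m / 2) / (1 - \<theta> powr (real m / 2)))
          * (\<theta> powr (real \<rho> / (2 * real \<tau>)) + \<theta> powr (- (real \<rho> / (2 * real \<tau>))))"
  proof -
    have "K * (q / (1 - q)) = 1 / 2 * (q / (1 - q)) * (\<theta> powr \<delta> + \<theta> powr (-\<delta>))"
      by (simp add: K_def)
    thus ?thesis by (simp add: logm q_def h_def \<delta>_def)
  qed
  show ?thesis
    using hi R unfolding avg_code_len_def f_def
    by (metis has_integral_integrable integral_unique)
qed

end
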